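(* There exists a family $(R(m,d))_{m,d\in\mathbb{N}}$, where $R(m,d)$ is a graph on vertex set $\{0,1\}^d\times[m]$, such that for every $d\in\mathbb{N}$ and $\varepsilon>0$, for all sufficiently large $m$: (i) for every $\ell\in[d]$, $(1-\varepsilon)2^{d-1}m^2\le e_\ell(R(m,d))\le(1+\varepsilon)2^{d-1}m^2$, and hence $(1-\varepsilon)d2^{d-1}m^2\le e(R(m,d))\le(1+\varepsilon)d2^{d-1}m^2$; (ii) for all distinct $x,y\in\{0,1\}^d$ and all $P\subseteq B_x$, $Q\subseteq B_y$ each of size at least $m^{2/3}$, the number of edges of $R(m,d)$ between $P$ and $Q$ is at most $(1+\varepsilon)2^{-d+\delta(x,y)}|P||Q|$.
   Context: For distinct $x,y\in\{0,1\}^d$, $\delta(x,y)=\min\{i: x_i\ne y_i\}$. For $x\in\{0,1\}^d$ the block $B_x$ is $\{x\}\times[m]$. An edge of a graph on $\{0,1\}^d\times[m]$ joining a vertex of $B_x$ to a vertex of $B_y$ with $\delta(x,y)=\ell$ is a level-$\ell$ edge, and $e_\ell(G)$ denotes the number of level-$\ell$ edges of $G$. *)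

theory Defs
  imports Complex_Main
begin

text \<open>Vertices of the blown-up cube: pairs (x, i) where x is a 0/1-string of length d
  (a bool list, coordinate k of the paper is the list entry k-1) and i \<in> [m] = {1..m}.\<close>
type_synonym vert = "bool list \<times> nat"

definition verts :: "nat \<Rightarrow> nat \<Rightarrow> vert set" where
  "verts m d = {(x, i). length x = d \<and> i \<in> {1..m}}"

definition is_graph_on :: "vert set \<Rightarrow> vert set set \<Rightarrow> bool" where
  "is_graph_on V E \<longleftrightarrow> (\<forall>e\<in>E. \<exists>u v. u \<in> V \<and> v \<in> V \<and> u \<noteq> v \<and> e = {u, v})"

definition delta :: "bool list \<Rightarrow> bool list \<Rightarrow> nat" where
  "delta x y = Min {i \<in> {1..length x}. x ! (i - 1) \<noteq> y ! (i - 1)}"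

definition block :: "nat \<Rightarrow> bool list \<Rightarrow> vert set" where
  "block m x = {x} \<times> {1..m}"

definition level_edges :: "nat \<Rightarrow> vert set set \<Rightarrow> nat" where
  "level_edges l E = card {e \<in> E. \<exists>u v. e = {u, v} \<and> fst u \<noteq> fst v \<and> delta (fst u) (fst v) = l}"

definition edges_between :: "vert set set \<Rightarrow> vert set \<Rightarrow> vert set \<Rightarrow> nat" where
  "edges_between E P Q = card {e \<in> E. \<exists>u\<in>P. \<exists>v\<in>Q. e = {u, v}}"

end

theory Submission imports Defs "HOL-Analysis.Convex"
begin

definition sg :: "bool \<Rightarrow> real" where "sg b = (if b then -1 else 1)"

definition ch :: "nat \<Rightarrow> nat set \<Rightarrow> (nat \<Rightarrow> bool) \<Rightarrow> nat set \<Rightarrow> real" where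
  "ch n S u B = (\<Prod>t\<in>S. \<Prod>p<n. sg (u p \<and> p + t \<in> B))"

lemma ch_mult: "ch n S u B * ch n S u' B = ch n S (\<lambda>p. u p \<noteq> u' p) B"
  unfolding ch_def prod.distrib[symmetric]
  by (intro prod.cong refl) (auto simp: sg_def)

lemma ch_false: "ch n S (\<lambda>p. False) B = 1"
  unfolding ch_def by (simp add: sg_def)

lemma ch_zero:
  assumes "finite S" "S \<noteq> {}" "S \<subseteq> {..<k}" "p0 < n" "w p0"
  shows "(\<Sum>B\<in>Pow {..<n+k}. ch n S w B) = 0"
proof -
  define p1 where "p1 = (LEAST p. w p)"
  have wp1: "w p1" unfolding p1_def by (rule LeastI[of w p0]) (rule assms(5))
  have p1le: "p1 \<le> p0" unfolding p1_def by (rule Least_le) (rule assms(5))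
  define t0 where "t0 = Min S"
  have t0S: "t0 \<in> S" unfolding t0_def using assms by simp
  have t0le: "\<And>t. t \<in> S \<Longrightarrow> t0 \<le> t" unfolding t0_def using assms by simp
  define q0 where "q0 = p1 + t0"
  have q0L: "q0 < n + k" unfolding q0_def using p1le assms t0S by auto
  define \<phi> where "\<phi> B = (if q0 \<in> B then B - {q0} else insert q0 B)" for B :: "nat set"
  have cp: "ch n S w B = (\<Prod>(t,p)\<in>S \<times> {..<n}. sg (w p \<and> p + t \<in> B))" for B
    unfolding ch_def by (simp add: prod.cartesian_product)
  have mem: "(t0, p1) \<in> S \<times> {..<n}" using t0S p1le assms by auto
  have split: "ch n S w B = sg (q0 \<in> B) * (\<Prod>(t,p)\<in>S \<times> {..<n} - {(t0,p1)}. sg (w p \<and> p + t \<in> B))" for B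
    unfolding cp using prod.remove[OF _ mem, of "\<lambda>(t,p). sg (w p \<and> p + t \<in> B)"] assms(1) wp1
    by (simp add: q0_def add.commute)
  have rest: "(\<Prod>(t,p)\<in>S \<times> {..<n} - {(t0,p1)}. sg (w p \<and> p + t \<in> \<phi> B)) =
     (\<Prod>(t,p)\<in>S \<times> {..<n} - {(t0,p1)}. sg (w p \<and> p + t \<in> B))" for B
  proof (intro prod.cong refl)
    fix z assume z: "z \<in> S \<times> {..<n} - {(t0,p1)}"
    obtain t p where zz: "z = (t,p)" by force
    have "w p \<Longrightarrow> p + t \<noteq> q0"
    proof -
      assume "w p"
      then have "p1 \<le> p" unfolding p1_def by (rule Least_le)
      moreover have "t0 \<le> t" using z zz t0le by auto
      ultimately show "p + t \<noteq> q0" using z zz unfolding q0_def by auto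
    qed
    then show "(case z of (t,p) \<Rightarrow> sg (w p \<and> p + t \<in> \<phi> B)) = (case z of (t,p) \<Rightarrow> sg (w p \<and> p + t \<in> B))"
      unfolding zz \<phi>_def by (cases "w p") auto
  qed
  have flip: "ch n S w (\<phi> B) = - ch n S w B" for B
    unfolding split rest by (simp add: \<phi>_def sg_def)
  have "(\<Sum>B\<in>Pow {..<n+k}. ch n S w (\<phi> B)) = (\<Sum>B\<in>Pow {..<n+k}. ch n S w B)"
    by (rule sum.reindex_bij_witness[of _ \<phi> \<phi>]) (use q0L in \<open>auto simp: \<phi>_def\<close>)
  then show ?thesis unfolding flip by (simp add: sum_negf)
qed

lemma bit_small: "(i::nat) < 2^n \<Longrightarrow> n \<le> p \<Longrightarrow> \<not> bit i p"
proof -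
  assume "i < 2^n" "n \<le> p"
  then have "i < 2^p" using power_increasing[of n p "2::nat"] by linarith
  then have "i div 2^p = 0" by simp
  then show ?thesis by (simp add: bit_iff_odd)
qed

lemma diff_bit:
  assumes "(i::nat) < 2^n" "i' < 2^n" "i \<noteq> i'"
  shows "\<exists>p<n. bit i p \<noteq> bit i' p"
proof -
  obtain p where "bit i p \<noteq> bit i' p" using assms(3) bit_eq_iff by blast
  moreover have "p < n" using calculation bit_small[OF assms(1)] bit_small[OF assms(2)] by (meson not_le)
  ultimately show ?thesis by blast
qed

lemma ch_sq_sum:
  assumes "P \<subseteq> {..<(2::nat)^n}" "finite S" "S \<noteq> {}" "S \<subseteq> {..<k}"
  shows "(\<Sum>B\<in>Pow {..<n+k}. (\<Sum>i\<in>P. ch n S (bit i) B)^2) = card P * 2^(n+k)"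
proof -
  have fP: "finite P" using assms(1) finite_subset by blast
  have inner: "(\<Sum>B\<in>Pow {..<n+k}. ch n S (bit i) B * ch n S (bit i') B) = (if i = i' then 2^(n+k) else 0)"
    if iP: "i \<in> P" "i' \<in> P" for i i'
  proof (cases "i = i'")
    case True
    have "ch n S (bit i) B * ch n S (bit i') B = 1" for B
      unfolding ch_mult True by (simp add: ch_false)
    then show ?thesis using True by (simp add: card_Pow)
  next
    case False
    obtain p where "p < n" "bit i p \<noteq> bit i' p" using diff_bit[of i n i'] iP assms(1) False by blast
    then have "(\<Sum>B\<in>Pow {..<n+k}. ch n S (\<lambda>p. bit i p \<noteq> bit i' p) B) = 0"
      using ch_zero[OF assms(2,3,4), of p n] by simp
    then show ?thesis unfolding ch_mult using False by simp
  qed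
  have "(\<Sum>B\<in>Pow {..<n+k}. (\<Sum>i\<in>P. ch n S (bit i) B)^2)
      = (\<Sum>B\<in>Pow {..<n+k}. \<Sum>i\<in>P. \<Sum>i'\<in>P. ch n S (bit i) B * ch n S (bit i') B)"
    by (simp add: power2_eq_square sum_product)
  also have "\<dots> = (\<Sum>i\<in>P. \<Sum>i'\<in>P. \<Sum>B\<in>Pow {..<n+k}. ch n S (bit i) B * ch n S (bit i') B)"
    by (simp add: sum.swap[of _ "Pow _"])
  also have "\<dots> = (\<Sum>i\<in>P. \<Sum>i'\<in>P. (if i = i' then 2^(n+k) else 0))"
    by (intro sum.cong refl) (simp add: inner)
  also have "\<dots> = card P * 2^(n+k)" using fP by simp
  finally show ?thesis .
qed

lemma ch_main:
  assumes "P \<subseteq> {..<(2::nat)^n}" "Q \<subseteq> {..<(2::nat)^n}" "finite S" "S \<noteq> {}" "S \<subseteq> {..<k}"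
  shows "\<bar>\<Sum>i\<in>P. \<Sum>j\<in>Q. ch n S (bit i) {q. bit j q}\<bar> \<le> sqrt (2^(n+k) * card P * card Q)"
proof -
  define a where "a B = (\<Sum>i\<in>P. ch n S (bit i) B)" for B
  define \<beta> where "\<beta> j = {q. bit j q}" for j :: nat
  have fQ: "finite Q" using assms(2) finite_subset by blast
  have sw: "(\<Sum>i\<in>P. \<Sum>j\<in>Q. ch n S (bit i) {q. bit j q}) = (\<Sum>j\<in>Q. a (\<beta> j))"
    unfolding a_def \<beta>_def by (rule sum.swap)
  have inj: "inj_on \<beta> Q" unfolding inj_on_def \<beta>_def by (metis bit_eq_iff mem_Collect_eq)
  have sub: "\<beta> ` Q \<subseteq> Pow {..<n+k}"
  proof
    fix B assume "B \<in> \<beta> ` Q"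
    then obtain j where j: "j \<in> Q" "B = \<beta> j" by auto
    have "q < n + k" if "bit j q" for q
      using bit_small[of j n q] j assms(2) that by (meson lessThan_iff not_le subsetD trans_less_add1)
    then show "B \<in> Pow {..<n+k}" using j unfolding \<beta>_def by auto
  qed
  have "(\<Sum>j\<in>Q. a (\<beta> j))^2 \<le> (\<Sum>j\<in>Q. (a (\<beta> j))^2) * card Q"
    by (rule sum_squared_le_sum_of_squares)
  also have "(\<Sum>j\<in>Q. (a (\<beta> j))^2) = (\<Sum>B\<in>\<beta> ` Q. (a B)^2)"
    using sum.reindex[OF inj, of "\<lambda>B. (a B)^2"] by simp
  also have "\<dots> \<le> (\<Sum>B\<in>Pow {..<n+k}. (a B)^2)"
    by (rule sum_mono2[OF _ sub]) auto
  also have "\<dots> = card P * 2^(n+k)" unfolding a_def by (rule ch_sq_sum[OF assms(1,3,4,5)])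
  finally have "(\<Sum>j\<in>Q. a (\<beta> j))^2 \<le> 2^(n+k) * card P * card Q"
    by (simp add: mult_right_mono algebra_simps)
  then have "\<bar>\<Sum>j\<in>Q. a (\<beta> j)\<bar> \<le> sqrt (2^(n+k) * card P * card Q)"
    using real_sqrt_le_mono by fastforce
  then show ?thesis unfolding sw .
qed


definition adj :: "nat \<Rightarrow> nat \<Rightarrow> nat \<Rightarrow> nat \<Rightarrow> bool" where
  "adj n k i j = (\<forall>t<k. (\<Prod>p<n. sg (bit i p \<and> bit j (p+t))) = 1)"

lemma sg_prod_pm: "(\<Prod>p<(n::nat). sg (f p)) = 1 \<or> (\<Prod>p<n. sg (f p)) = -1"
  by (induction n) (auto simp: sg_def)

lemma prod_ind:
  fixes k :: nat
  assumes "\<forall>t<k. c t = 1 \<or> c t = (-1::real)"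
  shows "(\<Prod>t<k. (c t + 1)/2) = of_bool (\<forall>t<k. c t = 1)"
  using assms
proof (induction k)
  case 0 then show ?case by simp
next
  case (Suc k)
  then have IH: "(\<Prod>t<k. (c t + 1)/2) = of_bool (\<forall>t<k. c t = 1)" by simp
  have "c k = 1 \<or> c k = -1" using Suc.prems by simp
  then show ?case unfolding prod.lessThan_Suc IH by (auto simp: less_Suc_eq)
qed

lemma adj_ind:
  "(of_bool (adj n k i j) :: real) = (\<Sum>S\<in>Pow{..<k}. ch n S (bit i) {q. bit j q}) / 2^k"
proof -
  define c where "c t = (\<Prod>p<n. sg (bit i p \<and> bit j (p+t)))" for t
  have pm: "\<forall>t<k. c t = 1 \<or> c t = -1" unfolding c_def by (intro allI impI) (rule sg_prod_pm)
  have pi: "(\<Prod>t<k. (c t + 1)/2) = of_bool (\<forall>t<k. c t = 1)" by (rule prod_ind[OF pm])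
  have "(of_bool (adj n k i j) :: real) = (\<Prod>t<k. (c t + 1)/2)"
    unfolding pi by (simp add: adj_def c_def)
  also have "\<dots> = (\<Prod>t<k. (c t + 1)) / 2^k"
    by (simp add: prod_dividef)
  also have "(\<Prod>t<k. (c t + 1)) = (\<Sum>X\<in>Pow {..<k}. (\<Prod>t\<in>X. c t))"
    by (simp add: prod_add)
  also have "\<dots> = (\<Sum>S\<in>Pow{..<k}. ch n S (bit i) {q. bit j q})"
    unfolding c_def ch_def by simp
  finally show ?thesis .
qed

lemma card_filter_sum:
  assumes "finite A"
  shows "real (card {x\<in>A. p x}) = (\<Sum>x\<in>A. (of_bool (p x) :: real))"
proof -
  have "real (card {x\<in>A. p x}) = (\<Sum>x\<in>{x\<in>A. p x}. (1::real))" by simp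
  also have "\<dots> = (\<Sum>x\<in>A. if p x then 1 else 0)" using assms by (rule sum.inter_filter)
  finally show ?thesis by (simp add: of_bool_def)
qed

lemma count_bound:
  assumes "P \<subseteq> {..<(2::nat)^n}" "Q \<subseteq> {..<(2::nat)^n}"
  shows "\<bar>real (card {(i,j)\<in>P \<times> Q. adj n k i j}) - card P * card Q / 2^k\<bar>
           \<le> sqrt (2^(n+k) * card P * card Q)"
proof -
  have fP: "finite P" and fQ: "finite Q" using assms finite_subset by blast+
  define g where "g S = (\<Sum>i\<in>P. \<Sum>j\<in>Q. ch n S (bit i) {q. bit j q})" for S
  define D where "D = sqrt (2^(n+k) * card P * card Q)"
  have se: "{(i,j)\<in>P \<times> Q. adj n k i j} = {z\<in>P \<times> Q. adj n k (fst z) (snd z)}" by auto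
  have "real (card {(i,j)\<in>P \<times> Q. adj n k i j}) = (\<Sum>z\<in>P \<times> Q. (of_bool (case z of (i,j) \<Rightarrow> adj n k i j) :: real))"
    unfolding se using card_filter_sum[of "P \<times> Q" "\<lambda>z. adj n k (fst z) (snd z)"] fP fQ by (simp add: case_prod_unfold)
  also have "\<dots> = (\<Sum>i\<in>P. \<Sum>j\<in>Q. (of_bool (adj n k i j) :: real))"
    by (simp add: sum.cartesian_product case_prod_unfold)
  also have "\<dots> = (\<Sum>S\<in>Pow{..<k}. g S) / 2^k"
    unfolding adj_ind g_def by (simp add: sum_divide_distrib[symmetric] sum.swap[of _ "Pow _"])
  also have "(\<Sum>S\<in>Pow{..<k}. g S) = g {} + (\<Sum>S\<in>Pow{..<k} - {{}}. g S)"
    by (rule sum.remove) auto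
  also have "g {} = card P * card Q" unfolding g_def ch_def by simp
  finally have eq: "real (card {(i,j)\<in>P \<times> Q. adj n k i j}) - card P * card Q / 2^k
      = (\<Sum>S\<in>Pow{..<k} - {{}}. g S) / 2^k" by (simp add: add_divide_distrib)
  have "\<bar>\<Sum>S\<in>Pow{..<k} - {{}}. g S\<bar> \<le> (\<Sum>S\<in>Pow{..<k} - {{}}. \<bar>g S\<bar>)" by (rule sum_abs)
  also have "\<dots> \<le> (\<Sum>S\<in>Pow{..<k} - {{}}. D)"
  proof (rule sum_mono)
    fix S assume S: "S \<in> Pow{..<k} - {{}}"
    then have "finite S" using finite_subset by blast
    then show "\<bar>g S\<bar> \<le> D" unfolding g_def D_def using ch_main[OF assms, of S k] S by auto
  qed
  also have "\<dots> = (2^k - 1) * D" by (simp add: card_Pow)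
  also have "\<dots> \<le> 2^k * D" unfolding D_def by (intro mult_right_mono) (simp_all add: of_nat_diff)
  finally have "\<bar>\<Sum>S\<in>Pow{..<k} - {{}}. g S\<bar> / 2^k \<le> D" by (simp add: field_simps)
  then show ?thesis unfolding eq D_def by simp
qed


lemma delta_props:
  assumes "length x = length y" "x \<noteq> y"
  shows "delta x y \<in> {1..length x}" "x ! (delta x y - 1) \<noteq> y ! (delta x y - 1)"
    "\<And>i. i < delta x y - 1 \<Longrightarrow> x ! i = y ! i"
proof -
  define D where "D = {i \<in> {1..length x}. x ! (i - 1) \<noteq> y ! (i - 1)}"
  obtain i where i: "i < length x" "x ! i \<noteq> y ! i" using assms nth_equalityI by blast
  have "Suc i \<in> D" unfolding D_def using i by auto
  then have ne: "D \<noteq> {}" by auto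
  have fin: "finite D" unfolding D_def by auto
  have "delta x y \<in> D" unfolding delta_def D_def[symmetric] using Min_in[OF fin ne] .
  then show "delta x y \<in> {1..length x}" "x ! (delta x y - 1) \<noteq> y ! (delta x y - 1)"
    unfolding D_def by auto
  fix j assume j: "j < delta x y - 1"
  show "x ! j = y ! j"
  proof (rule ccontr)
    assume "x ! j \<noteq> y ! j"
    moreover have "Suc j \<le> length x" using j \<open>delta x y \<in> D\<close> unfolding D_def by auto
    ultimately have "Suc j \<in> D" unfolding D_def by auto
    then have "delta x y \<le> Suc j" unfolding delta_def D_def[symmetric] using fin by simp
    then show False using j by simp
  qed
qed

lemma delta_sym:
  assumes "length x = length y"
  shows "delta x y = delta y x"
  unfolding delta_def assms by (intro arg_cong[where f=Min]) auto

lemma delta_app: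
  assumes "length b = length c"
  shows "delta (a @ False # b) (a @ True # c) = Suc (length a)"
  unfolding delta_def
proof (rule Min_eqI)
  show "finite {i \<in> {1..length (a @ False # b)}. (a @ False # b) ! (i - 1) \<noteq> (a @ True # c) ! (i - 1)}" by auto
  show "Suc (length a) \<in> {i \<in> {1..length (a @ False # b)}. (a @ False # b) ! (i - 1) \<noteq> (a @ True # c) ! (i - 1)}"
    by (simp add: nth_append)
  fix i assume "i \<in> {i \<in> {1..length (a @ False # b)}. (a @ False # b) ! (i - 1) \<noteq> (a @ True # c) ! (i - 1)}"
  then have i: "1 \<le> i" "(a @ False # b) ! (i - 1) \<noteq> (a @ True # c) ! (i - 1)" by auto
  show "Suc (length a) \<le> i"
  proof (rule ccontr)
    assume "\<not> Suc (length a) \<le> i"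
    then have "i - 1 < length a" using i by auto
    then show False using i by (simp add: nth_append)
  qed
qed

section \<open>Construction\<close>

definition nb :: "nat \<Rightarrow> nat" where "nb m = (LEAST n. m < 2^n)"

lemma nb_gt: "m < 2 ^ nb m"
  unfolding nb_def by (rule LeastI[of _ m]) simp

lemma nb_le: assumes "1 \<le> m" shows "2 ^ nb m \<le> 2 * m"
proof (cases "nb m")
  case 0 then show ?thesis using nb_gt[of m] assms by simp
next
  case (Suc r)
  have "\<not> m < 2^r" unfolding nb_def
    by (rule not_less_Least) (use Suc in \<open>simp add: nb_def\<close>)
  then show ?thesis using Suc by simp
qed

definition OP :: "nat \<Rightarrow> (bool list \<times> bool list) set" where
  "OP d = {(x,y). length x = d \<and> length y = d \<and> x \<noteq> y \<and> \<not> x ! (delta x y - 1)}"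

definition Adj :: "nat \<Rightarrow> nat \<Rightarrow> (nat \<times> nat) set" where
  "Adj m k = {(i,j). i \<in> {1..m} \<and> j \<in> {1..m} \<and> adj (nb m) k i j}"

definition Base :: "nat \<Rightarrow> nat \<Rightarrow> ((bool list \<times> bool list) \<times> (nat \<times> nat)) set" where
  "Base m d = {((x,y),(i,j)). (x,y) \<in> OP d \<and> (i,j) \<in> Adj m (d - delta x y)}"

definition fE :: "(bool list \<times> bool list) \<times> (nat \<times> nat) \<Rightarrow> vert set" where
  "fE z = (case z of ((x,y),(i,j)) \<Rightarrow> {(x,i),(y,j)})"

definition RR :: "nat \<Rightarrow> nat \<Rightarrow> vert set set" where
  "RR m d = fE ` Base m d"

lemma OP_asym: "(x,y) \<in> OP d \<Longrightarrow> (y,x) \<notin> OP d"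
  unfolding OP_def using delta_sym delta_props(2) by fastforce

lemma OP_flip: "length x = d \<Longrightarrow> length y = d \<Longrightarrow> x \<noteq> y \<Longrightarrow> (x,y) \<notin> OP d \<Longrightarrow> (y,x) \<in> OP d"
  unfolding OP_def using delta_sym delta_props(2) by fastforce

lemma inj_fE: "inj_on fE (Base m d)"
proof (rule inj_onI)
  fix z z' assume z: "z \<in> Base m d" "z' \<in> Base m d" "fE z = fE z'"
  obtain x y i j where zz: "z = ((x,y),(i,j))" by (metis prod.exhaust)
  obtain x' y' i' j' where zz': "z' = ((x',y'),(i',j'))" by (metis prod.exhaust)
  have o: "(x,y) \<in> OP d" "(x',y') \<in> OP d" using z zz zz' unfolding Base_def by auto
  have "{(x,i),(y,j)} = {(x',i'),(y',j')}" using z(3) zz zz' unfolding fE_def by simp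
  then have "((x,i) = (x',i') \<and> (y,j) = (y',j')) \<or> ((x,i) = (y',j') \<and> (y,j) = (x',i'))"
    by (simp add: doubleton_eq_iff)
  then show "z = z'" using o OP_asym zz zz' by auto
qed

lemma finite_Adj: "finite (Adj m k)"
  by (rule finite_subset[of _ "{1..m} \<times> {1..m}"]) (auto simp: Adj_def)

definition Lk :: "nat \<Rightarrow> bool list set" where "Lk n = {xs. length xs = n}"

lemma card_Lk: "card (Lk n) = 2 ^ n" and finite_Lk: "finite (Lk n)"
proof -
  have e: "Lk n = {xs. set xs \<subseteq> UNIV \<and> length xs = n}" unfolding Lk_def by auto
  show "card (Lk n) = 2 ^ n" unfolding e using card_lists_length_eq[of "UNIV::bool set" n] by simp
  show "finite (Lk n)" unfolding e by (rule finite_lists_length_eq) simp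
qed

lemma finite_OP: "finite (OP d)"
  by (rule finite_subset[OF _ finite_cartesian_product[OF finite_Lk[of d] finite_Lk[of d]]]) (auto simp: OP_def Lk_def)

definition Pl :: "nat \<Rightarrow> nat \<Rightarrow> (bool list \<times> bool list) set" where
  "Pl d l = {(x,y) \<in> OP d. delta x y = l}"

lemma card_Pl:
  assumes "1 \<le> l" "l \<le> d"
  shows "card (Pl d l) = 2 ^ (2*d - l - 1)"
proof -
  define g where "g z = (case z of (a,(b,c)) \<Rightarrow> (a @ False # b, a @ True # c))" for z :: "bool list \<times> bool list \<times> bool list"
  define X where "X = Lk (l-1) \<times> (Lk (d-l) \<times> Lk (d-l))"
  have img: "Pl d l = g ` X"
  proof
    show "g ` X \<subseteq> Pl d l"
    proof
      fix z assume "z \<in> g ` X"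
      then obtain a b c where abc: "z = g (a,(b,c))" "length a = l - 1" "length b = d - l" "length c = d - l"
        unfolding X_def Lk_def by auto
      have dl: "delta (a @ False # b) (a @ True # c) = l" using delta_app[of b c a] abc assms by simp
      show "z \<in> Pl d l" unfolding abc(1) g_def Pl_def OP_def using dl abc assms
        by (auto simp: nth_append)
    qed
    show "Pl d l \<subseteq> g ` X"
    proof
      fix z assume z: "z \<in> Pl d l"
      obtain x y where zz: "z = (x,y)" by force
      have h: "length x = d" "length y = d" "x \<noteq> y" "\<not> x ! (l - 1)" "delta x y = l"
        using z zz unfolding Pl_def OP_def by auto
      have yl: "y ! (l-1)" using delta_props(2)[of x y] h by auto
      have tk: "take (l-1) y = take (l-1) x"
        by (rule nth_equalityI) (use h delta_props(3)[of x y] in auto)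
      have x: "x = take (l-1) x @ False # drop l x"
        using id_take_nth_drop[of "l-1" x] h assms by simp
      have y: "y = take (l-1) x @ True # drop l y"
        using id_take_nth_drop[of "l-1" y] h assms yl tk by simp
      have "z = g (take (l-1) x, (drop l x, drop l y))" unfolding g_def zz using x y by simp
      moreover have "(take (l-1) x, (drop l x, drop l y)) \<in> X" unfolding X_def Lk_def using h assms by auto
      ultimately show "z \<in> g ` X" by blast
    qed
  qed
  have inj: "inj_on g X"
  proof (rule inj_onI)
    fix z z' assume "z \<in> X" "z' \<in> X" "g z = g z'"
    then show "z = z'" unfolding X_def Lk_def g_def by (auto simp: append_eq_append_conv)
  qed
  have "card (Pl d l) = card X" unfolding img using card_image[OF inj] .
  also have "\<dots> = 2^(l-1) * (2^(d-l) * 2^(d-l))" unfolding X_def by (simp add: card_cartesian_product card_Lk)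
  also have "\<dots> = 2 ^ (2*d - l - 1)" unfolding power_add[symmetric] using assms by (simp add: algebra_simps)
  finally show ?thesis .
qed


lemma finite_Pl: "finite (Pl d l)"
  by (rule finite_subset[OF _ finite_OP[of d]]) (auto simp: Pl_def)

lemma Base_decomp: "Base m d = (\<Union>l\<in>{1..d}. Pl d l \<times> Adj m (d-l))"
proof
  show "Base m d \<subseteq> (\<Union>l\<in>{1..d}. Pl d l \<times> Adj m (d-l))"
  proof
    fix z assume z: "z \<in> Base m d"
    obtain x y i j where zz: "z = ((x,y),(i,j))" by (metis prod.exhaust)
    have o: "(x,y) \<in> OP d" "(i,j) \<in> Adj m (d - delta x y)" using z zz unfolding Base_def by auto
    have "delta x y \<in> {1..d}" using o(1) delta_props(1)[of x y] unfolding OP_def by auto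
    then show "z \<in> (\<Union>l\<in>{1..d}. Pl d l \<times> Adj m (d-l))" using o zz unfolding Pl_def by auto
  qed
  show "(\<Union>l\<in>{1..d}. Pl d l \<times> Adj m (d-l)) \<subseteq> Base m d"
    unfolding Pl_def Base_def by auto
qed

lemma card_RR: "card (RR m d) = (\<Sum>l\<in>{1..d}. card (Pl d l) * card (Adj m (d-l)))"
proof -
  have "card (RR m d) = card (Base m d)" unfolding RR_def by (rule card_image[OF inj_fE])
  also have "\<dots> = (\<Sum>l\<in>{1..d}. card (Pl d l \<times> Adj m (d-l)))" unfolding Base_decomp
    by (rule card_UN_disjoint) (auto simp: finite_Pl finite_Adj, auto simp: Pl_def)
  finally show ?thesis by (simp add: card_cartesian_product)
qed

lemma level_RR:
  assumes "l \<in> {1..d}"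
  shows "level_edges l (RR m d) = card (Pl d l) * card (Adj m (d-l))"
proof -
  have eq: "{e \<in> RR m d. \<exists>u v. e = {u, v} \<and> fst u \<noteq> fst v \<and> delta (fst u) (fst v) = l}
      = fE ` (Pl d l \<times> Adj m (d-l))"
  proof
    show "{e \<in> RR m d. \<exists>u v. e = {u, v} \<and> fst u \<noteq> fst v \<and> delta (fst u) (fst v) = l}
      \<subseteq> fE ` (Pl d l \<times> Adj m (d-l))"
    proof
      fix e assume e: "e \<in> {e \<in> RR m d. \<exists>u v. e = {u, v} \<and> fst u \<noteq> fst v \<and> delta (fst u) (fst v) = l}"
      then obtain z where z: "z \<in> Base m d" "e = fE z" unfolding RR_def by auto
      obtain x y i j where zz: "z = ((x,y),(i,j))" by (metis prod.exhaust)
      have o: "(x,y) \<in> OP d" "(i,j) \<in> Adj m (d - delta x y)" using z zz unfolding Base_def by auto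
      obtain u v where uv: "e = {u,v}" "fst u \<noteq> fst v" "delta (fst u) (fst v) = l" using e by auto
      have "{(x,i),(y,j)} = {u,v}" using uv z zz unfolding fE_def by simp
      then have "(u = (x,i) \<and> v = (y,j)) \<or> (u = (y,j) \<and> v = (x,i))" by (auto simp: doubleton_eq_iff)
      then have "delta x y = l" using uv delta_sym[of x y] o(1) unfolding OP_def by auto
      then show "e \<in> fE ` (Pl d l \<times> Adj m (d-l))" using o z zz unfolding Pl_def by auto
    qed
    show "fE ` (Pl d l \<times> Adj m (d-l))
      \<subseteq> {e \<in> RR m d. \<exists>u v. e = {u, v} \<and> fst u \<noteq> fst v \<and> delta (fst u) (fst v) = l}"
    proof
      fix e assume "e \<in> fE ` (Pl d l \<times> Adj m (d-l))"
      then obtain x y i j where h: "(x,y) \<in> Pl d l" "(i,j) \<in> Adj m (d-l)" "e = fE ((x,y),(i,j))" by auto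
      have "((x,y),(i,j)) \<in> Base m d" using h unfolding Pl_def Base_def by auto
      then have "e \<in> RR m d" using h unfolding RR_def by auto
      moreover have "e = {(x,i),(y,j)}" "x \<noteq> y" "delta x y = l" using h unfolding fE_def Pl_def OP_def by auto
      ultimately show "e \<in> {e \<in> RR m d. \<exists>u v. e = {u, v} \<and> fst u \<noteq> fst v \<and> delta (fst u) (fst v) = l}"
        by (intro CollectI conjI exI[of _ "(x,i)"] exI[of _ "(y,j)"]) auto
    qed
  qed
  have sub: "Pl d l \<times> Adj m (d-l) \<subseteq> Base m d" unfolding Base_def Pl_def by auto
  show ?thesis unfolding level_edges_def eq card_image[OF inj_on_subset[OF inj_fE sub]]
    by (simp add: card_cartesian_product)
qed

lemma between_RR:
  assumes "(x,y) \<in> OP d" "P \<subseteq> block m x" "Q \<subseteq> block m y"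
  shows "edges_between (RR m d) P Q
     = card {(i,j)\<in>{i. (x,i)\<in>P} \<times> {j. (y,j)\<in>Q}. adj (nb m) (d - delta x y) i j}"
proof -
  define T where "T = {(i,j)\<in>{i. (x,i)\<in>P} \<times> {j. (y,j)\<in>Q}. adj (nb m) (d - delta x y) i j}"
  have xy: "x \<noteq> y" using assms(1) unfolding OP_def by auto
  have eq: "{e \<in> RR m d. \<exists>u\<in>P. \<exists>v\<in>Q. e = {u, v}} = fE ` ({(x,y)} \<times> T)"
  proof
    show "{e \<in> RR m d. \<exists>u\<in>P. \<exists>v\<in>Q. e = {u, v}} \<subseteq> fE ` ({(x,y)} \<times> T)"
    proof
      fix e assume e: "e \<in> {e \<in> RR m d. \<exists>u\<in>P. \<exists>v\<in>Q. e = {u, v}}"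
      then obtain z where z: "z \<in> Base m d" "e = fE z" unfolding RR_def by auto
      obtain x' y' i j where zz: "z = ((x',y'),(i,j))" by (metis prod.exhaust)
      have o: "(x',y') \<in> OP d" "(i,j) \<in> Adj m (d - delta x' y')" using z zz unfolding Base_def by auto
      obtain u v where uv: "u \<in> P" "v \<in> Q" "e = {u,v}" using e by auto
      have fu: "fst u = x" "fst v = y" using uv assms(2,3) unfolding block_def by auto
      have "{(x',i),(y',j)} = {u,v}" using uv z zz unfolding fE_def by simp
      then have c: "(u = (x',i) \<and> v = (y',j)) \<or> (u = (y',j) \<and> v = (x',i))" by (auto simp: doubleton_eq_iff)
      have "\<not> (u = (y',j) \<and> v = (x',i))"
      proof
        assume "u = (y',j) \<and> v = (x',i)"
        then have "x' = y" "y' = x" using fu by auto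
        then show False using o(1) assms(1) OP_asym by blast
      qed
      then have uu: "u = (x,i)" "v = (y,j)" "x' = x" "y' = y" using c fu by auto
      have "(i,j) \<in> T" unfolding T_def using uu uv o unfolding Adj_def by auto
      then show "e \<in> fE ` ({(x,y)} \<times> T)" using z zz uu by auto
    qed
    show "fE ` ({(x,y)} \<times> T) \<subseteq> {e \<in> RR m d. \<exists>u\<in>P. \<exists>v\<in>Q. e = {u, v}}"
    proof
      fix e assume "e \<in> fE ` ({(x,y)} \<times> T)"
      then obtain i j where h: "(i,j) \<in> T" "e = fE ((x,y),(i,j))" by auto
      have ij: "(x,i) \<in> P" "(y,j) \<in> Q" "adj (nb m) (d - delta x y) i j" using h unfolding T_def by auto
      have "i \<in> {1..m}" "j \<in> {1..m}" using ij assms(2,3) unfolding block_def by auto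
      then have "((x,y),(i,j)) \<in> Base m d" using assms(1) ij unfolding Base_def Adj_def by auto
      then have "e \<in> RR m d" using h unfolding RR_def by auto
      then show "e \<in> {e \<in> RR m d. \<exists>u\<in>P. \<exists>v\<in>Q. e = {u, v}}" using ij h unfolding fE_def by auto
    qed
  qed
  have sub: "{(x,y)} \<times> T \<subseteq> Base m d"
  proof
    fix z assume "z \<in> {(x,y)} \<times> T"
    then obtain i j where h: "z = ((x,y),(i,j))" "(i,j) \<in> T" by auto
    have ij: "(x,i) \<in> P" "(y,j) \<in> Q" "adj (nb m) (d - delta x y) i j" using h unfolding T_def by auto
    have "i \<in> {1..m}" "j \<in> {1..m}" using ij assms(2,3) unfolding block_def by auto
    then show "z \<in> Base m d" using assms(1) ij h unfolding Base_def Adj_def by auto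
  qed
  show ?thesis unfolding edges_between_def eq card_image[OF inj_on_subset[OF inj_fE sub]] T_def[symmetric]
    by (simp add: card_cartesian_product)
qed

lemma graph_RR: "is_graph_on (verts m d) (RR m d)"
  unfolding is_graph_on_def
proof
  fix e assume "e \<in> RR m d"
  then obtain x y i j where h: "((x,y),(i,j)) \<in> Base m d" "e = fE ((x,y),(i,j))" unfolding RR_def by auto
  then have "length x = d" "length y = d" "x \<noteq> y" "i \<in> {1..m}" "j \<in> {1..m}"
    unfolding Base_def OP_def Adj_def by auto
  then show "\<exists>u v. u \<in> verts m d \<and> v \<in> verts m d \<and> u \<noteq> v \<and> e = {u, v}" using h(2)
    by (intro exI[of _ "(x,i)"] exI[of _ "(y,j)"]) (auto simp: verts_def fE_def)
qed


section \<open>Estimates\<close>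

lemma adj_count:
  assumes "1 \<le> m" "k \<le> d" "P \<subseteq> {1..m}" "Q \<subseteq> {1..m}"
  shows "\<bar>real (card {(i,j)\<in>P \<times> Q. adj (nb m) k i j}) - card P * card Q / 2^k\<bar>
           \<le> sqrt (2^(d+1) * real m * real (card P) * real (card Q))"
proof -
  have sub: "P \<subseteq> {..<(2::nat)^nb m}" "Q \<subseteq> {..<(2::nat)^nb m}"
    using assms(3,4) nb_gt[of m] by auto
  have "(2::real)^(nb m + k) = 2^(nb m) * 2^k" by (simp add: power_add)
  also have "\<dots> \<le> (2 * real m) * 2^d"
  proof (rule mult_mono)
    show "(2::real)^(nb m) \<le> 2 * real m" using nb_le[OF assms(1)] by (metis of_nat_le_iff of_nat_mult of_nat_numeral of_nat_power)
    show "(2::real)^k \<le> 2^d" using assms(2) by (simp add: power_increasing)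
  qed auto
  also have "\<dots> = 2^(d+1) * real m" by simp
  finally have le: "(2::real)^(nb m + k) \<le> 2^(d+1) * real m" .
  have le2: "real (2^(nb m+k) * card P * card Q) \<le> 2^(d+1) * real m * real (card P) * real (card Q)"
  proof -
    have "real (2^(nb m+k) * card P * card Q) = 2^(nb m+k) * real (card P) * real (card Q)" by simp
    also have "\<dots> \<le> 2^(d+1) * real m * real (card P) * real (card Q)"
      by (rule mult_right_mono[OF mult_right_mono[OF le]]) auto
    finally show ?thesis .
  qed
  have "\<bar>real (card {(i,j)\<in>P \<times> Q. adj (nb m) k i j}) - card P * card Q / 2^k\<bar>
           \<le> sqrt (real (2^(nb m + k) * card P * card Q))"
    using count_bound[OF sub, of k] by simp
  also have "\<dots> \<le> sqrt (2^(d+1) * real m * real (card P) * real (card Q))"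
    by (rule real_sqrt_le_mono[OF le2])
  finally show ?thesis .
qed

lemma sqrt_le_sq: "X \<le> Y^2 \<Longrightarrow> 0 \<le> Y \<Longrightarrow> sqrt X \<le> Y"
  by (metis real_sqrt_abs real_sqrt_le_mono abs_of_nonneg)

lemma level_bound:
  assumes l: "l \<in> {1..d}" and m1: "1 \<le> m" and mc: "2^(3*d+1)/\<epsilon>^2 \<le> real m" and e: "\<epsilon> > 0"
  shows "(1 - \<epsilon>) * 2 ^ (d - 1) * real m ^ 2 \<le> real (level_edges l (RR m d)) \<and>
         real (level_edges l (RR m d)) \<le> (1 + \<epsilon>) * 2 ^ (d - 1) * real m ^ 2"
proof -
  define k where "k = d - l"
  have kd: "k \<le> d" unfolding k_def by simp
  define A where "A = real (card (Adj m k))"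
  have Aeq: "Adj m k = {(i,j)\<in>{1..m} \<times> {1..m}. adj (nb m) k i j}" unfolding Adj_def by auto
  have Ab: "\<bar>A - m * m / 2^k\<bar> \<le> sqrt (2^(d+1) * real m * real m * real m)"
    using adj_count[OF m1 kd order_refl order_refl] unfolding A_def Aeq by simp
  have lev: "real (level_edges l (RR m d)) = 2^(d-1) * (2^k * A)"
  proof -
    have cp: "card (Pl d l) = 2^(2*d-l-1)" using card_Pl l by auto
    have ex: "2*d-l-1 = (d-1) + k" using l unfolding k_def by auto
    show ?thesis unfolding level_RR[OF l] cp ex A_def k_def[symmetric] by (simp add: power_add)
  qed
  define E where "E = 2^k * sqrt (2^(d+1) * real m * real m * real m)"
  have b1: "\<bar>2^k * A - (real m)^2\<bar> \<le> E"
  proof -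
    have "2^k * (A - m * m / 2^k) = 2^k * A - (real m)^2" by (simp add: field_simps power2_eq_square)
    then have "\<bar>2^k * A - (real m)^2\<bar> = \<bar>2^k\<bar> * \<bar>A - m * m / 2^k\<bar>"
      by (metis abs_mult)
    also have "\<bar>(2::real)^k\<bar> = 2^k" by simp
    finally have "\<bar>2^k * A - (real m)^2\<bar> = 2^k * \<bar>A - m * m / 2^k\<bar>" .
    also have "\<dots> \<le> E" unfolding E_def by (rule mult_left_mono[OF Ab]) simp
    finally show ?thesis .
  qed
  have E2: "E \<le> \<epsilon> * (real m)^2"
  proof -
    have "E = sqrt (((2::real)^k)^2 * (2^(d+1) * real m * real m * real m))" unfolding E_def by (simp add: real_sqrt_mult)
    also have "\<dots> \<le> \<epsilon> * (real m)^2"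
    proof (rule sqrt_le_sq)
      have "(2::real)^k \<le> 2^d" using kd by (simp add: power_increasing)
      then have "((2::real)^k)^2 \<le> (2^d)^2" by (simp add: power_mono)
      then have "((2::real)^k)^2 * (2^(d+1) * real m * real m * real m) \<le> (2^d)^2 * (2^(d+1) * real m * real m * real m)"
        by (simp add: mult_right_mono)
      also have "\<dots> = 2^(3*d+1) * real m * real m * real m" by (simp add: power_add[symmetric] power_mult[symmetric] algebra_simps)
      also have "\<dots> \<le> (\<epsilon>^2 * real m) * real m * real m * real m"
      proof -
        have "2^(3*d+1) \<le> \<epsilon>^2 * m" using mc e by (simp add: field_simps)
        then show ?thesis by (simp add: mult_right_mono)
      qed
      also have "\<dots> = (\<epsilon> * (real m)^2)^2" by (simp add: power2_eq_square)
      finally show "((2::real)^k)^2 * (2^(d+1) * real m * real m * real m) \<le> (\<epsilon> * (real m)^2)^2" .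
      show "0 \<le> \<epsilon> * (real m)^2" using e by simp
    qed
    finally show ?thesis .
  qed
  have "(1 - \<epsilon>) * (real m)^2 \<le> 2^k * A" "2^k * A \<le> (1 + \<epsilon>) * (real m)^2" using b1 E2 by (auto simp: algebra_simps abs_le_iff)
  then show ?thesis unfolding lev
    by (auto simp: mult.assoc mult.left_commute[of "2^(d-1)"] intro: mult_left_mono)
qed


lemma between_bound:
  assumes o: "(x,y) \<in> OP d" and P: "P \<subseteq> block m x" and Q: "Q \<subseteq> block m y" and m1: "1 \<le> m"
    and e: "\<epsilon> > 0" and mc: "2^(3*d+1)/\<epsilon>^2 \<le> real m powr (1/3)"
    and cP: "real m powr (2/3) \<le> card P" and cQ: "real m powr (2/3) \<le> card Q"
  shows "real (edges_between (RR m d) P Q) \<le> (1+\<epsilon>) * 2 powr (real (delta x y) - real d) * card P * card Q"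
proof -
  define k where "k = d - delta x y"
  have dd: "delta x y \<le> d" using o delta_props(1)[of x y] unfolding OP_def by auto
  have kd: "k \<le> d" unfolding k_def by simp
  define P' where "P' = {i. (x,i) \<in> P}"
  define Q' where "Q' = {j. (y,j) \<in> Q}"
  have Pim: "P = (\<lambda>i. (x,i)) ` P'" using P unfolding P'_def block_def by auto
  have Qim: "Q = (\<lambda>j. (y,j)) ` Q'" using Q unfolding Q'_def block_def by auto
  have cP': "card P' = card P" unfolding Pim by (rule card_image[symmetric]) (auto simp: inj_on_def)
  have cQ': "card Q' = card Q" unfolding Qim by (rule card_image[symmetric]) (auto simp: inj_on_def)
  have sP: "P' \<subseteq> {1..m}" using P unfolding P'_def block_def by auto
  have sQ: "Q' \<subseteq> {1..m}" using Q unfolding Q'_def block_def by auto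
  have eb: "edges_between (RR m d) P Q = card {(i,j)\<in>P' \<times> Q'. adj (nb m) k i j}"
    unfolding between_RR[OF o P Q] P'_def Q'_def k_def ..
  define N where "N = real (card P) * real (card Q)"
  have ac: "real (edges_between (RR m d) P Q) \<le> N / 2^k + sqrt (2^(d+1) * real m * N)"
    using adj_count[OF m1 kd sP sQ] unfolding eb cP' cQ' N_def by (simp add: abs_le_iff mult.assoc)
  have pw: "2 powr (real (delta x y) - real d) = 1 / 2^k"
  proof -
    have "(2::real)^d = 2^(delta x y) * 2^k" unfolding k_def power_add[symmetric] using dd by simp
    then show ?thesis by (simp add: powr_diff powr_realpow)
  qed
  have m0: "0 < real m" using m1 by simp
  have mp: "real m powr (2/3) * real m powr (2/3) = real m * real m powr (1/3)"
  proof -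
    have "real m powr (2/3) * real m powr (2/3) = real m powr (1 + 1/3)" by (simp add: powr_add[symmetric])
    also have "\<dots> = real m powr 1 * real m powr (1/3)" by (rule powr_add)
    also have "\<dots> = real m * real m powr (1/3)" using m0 by simp
    finally show ?thesis .
  qed
  have Nge: "real m * real m powr (1/3) \<le> N"
    unfolding N_def mp[symmetric] by (rule mult_mono[OF cP cQ]) auto
  have Npos: "0 < N" using Nge m0 by (smt (verit) powr_gt_zero mult_pos_pos)
  have key: "2^(3*d+1) * real m \<le> \<epsilon>^2 * N"
  proof -
    have "2^(3*d+1) \<le> \<epsilon>^2 * real m powr (1/3)" using mc e by (simp add: field_simps)
    then have "2^(3*d+1) * real m \<le> \<epsilon>^2 * (real m * real m powr (1/3))"
      using m0 by (simp add: mult_right_mono algebra_simps)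
    also have "\<dots> \<le> \<epsilon>^2 * N" using Nge e by (simp add: mult_left_mono)
    finally show ?thesis .
  qed
  have sq: "sqrt (2^(d+1) * real m * N) \<le> \<epsilon> * N / 2^k"
  proof (rule sqrt_le_sq)
    have k4: "(2::real)^(d+1) * 2^k * 2^k \<le> 2^(3*d+1)"
    proof -
      have "(2::real)^k \<le> 2^d" using kd by (simp add: power_increasing)
      then have "(2::real)^(d+1) * 2^k * 2^k \<le> 2^(d+1) * 2^d * 2^d"
        by (simp add: mult_mono)
      also have "\<dots> = 2^(3*d+1)" by (simp add: power_add[symmetric] algebra_simps)
      finally show ?thesis .
    qed
    have "2^(d+1) * real m * N * 2^k * 2^k \<le> 2^(3*d+1) * real m * N"
      using k4 m0 Npos by (simp add: mult_right_mono mult.commute mult.left_commute)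
    also have "\<dots> \<le> \<epsilon>^2 * N * N" using key Npos by (simp add: mult_right_mono)
    finally have "2^(d+1) * real m * N * 2^k * 2^k \<le> \<epsilon>^2 * N * N" .
    then show "2^(d+1) * real m * N \<le> (\<epsilon> * N / 2^k)^2"
      by (simp add: power2_eq_square field_simps)
    show "0 \<le> \<epsilon> * N / 2^k" using e Npos by simp
  qed
  have "real (edges_between (RR m d) P Q) \<le> N / 2^k + \<epsilon> * N / 2^k" using ac sq by linarith
  also have "\<dots> = (1+\<epsilon>) * 2 powr (real (delta x y) - real d) * card P * card Q"
    unfolding pw N_def by (simp add: field_simps)
  finally show ?thesis .
qed


lemma edges_between_sym: "edges_between E P Q = edges_between E Q P"
proof -
  have "{e \<in> E. \<exists>u\<in>P. \<exists>v\<in>Q. e = {u, v}} = {e \<in> E. \<exists>u\<in>Q. \<exists>v\<in>P. e = {u, v}}"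
    by (auto simp: insert_commute)
  then show ?thesis unfolding edges_between_def by simp
qed

theorem proposition2p4:
  shows "\<exists>R :: nat \<Rightarrow> nat \<Rightarrow> vert set set.
    (\<forall>m d. is_graph_on (verts m d) (R m d)) \<and>
    (\<forall>d::nat. \<forall>\<epsilon>::real. \<epsilon> > 0 \<longrightarrow> (\<exists>M. \<forall>m\<ge>M.
      (\<forall>l\<in>{1..d}.
          (1 - \<epsilon>) * 2 ^ (d - 1) * real m ^ 2 \<le> real (level_edges l (R m d)) \<and>
          real (level_edges l (R m d)) \<le> (1 + \<epsilon>) * 2 ^ (d - 1) * real m ^ 2) \<and>
      (1 - \<epsilon>) * real d * 2 ^ (d - 1) * real m ^ 2 \<le> real (card (R m d)) \<and>
      real (card (R m d)) \<le> (1 + \<epsilon>) * real d * 2 ^ (d - 1) * real m ^ 2 \<and>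
      (\<forall>x y P Q. length x = d \<and> length y = d \<and> x \<noteq> y \<and>
          P \<subseteq> block m x \<and> Q \<subseteq> block m y \<and>
          real (card P) \<ge> real m powr (2/3) \<and> real (card Q) \<ge> real m powr (2/3) \<longrightarrow>
          real (edges_between (R m d) P Q)
            \<le> (1 + \<epsilon>) * 2 powr (real (delta x y) - real d) * real (card P) * real (card Q))))"
proof (rule exI[of _ RR], intro conjI)
  show "\<forall>m d. is_graph_on (verts m d) (RR m d)" using graph_RR by blast
  show "\<forall>d::nat. \<forall>\<epsilon>::real. \<epsilon> > 0 \<longrightarrow> (\<exists>M. \<forall>m\<ge>M.
      (\<forall>l\<in>{1..d}.
          (1 - \<epsilon>) * 2 ^ (d - 1) * real m ^ 2 \<le> real (level_edges l (RR m d)) \<and>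
          real (level_edges l (RR m d)) \<le> (1 + \<epsilon>) * 2 ^ (d - 1) * real m ^ 2) \<and>
      (1 - \<epsilon>) * real d * 2 ^ (d - 1) * real m ^ 2 \<le> real (card (RR m d)) \<and>
      real (card (RR m d)) \<le> (1 + \<epsilon>) * real d * 2 ^ (d - 1) * real m ^ 2 \<and>
      (\<forall>x y P Q. length x = d \<and> length y = d \<and> x \<noteq> y \<and>
          P \<subseteq> block m x \<and> Q \<subseteq> block m y \<and>
          real (card P) \<ge> real m powr (2/3) \<and> real (card Q) \<ge> real m powr (2/3) \<longrightarrow>
          real (edges_between (RR m d) P Q)
            \<le> (1 + \<epsilon>) * 2 powr (real (delta x y) - real d) * real (card P) * real (card Q)))"
  proof (intro allI impI)
    fix d :: nat and \<epsilon> :: real assume e: "\<epsilon> > 0"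
    define c where "c = 2^(3*d+1)/\<epsilon>^2"
    have c0: "c > 0" unfolding c_def using e by simp
    define M where "M = nat \<lceil>c^3\<rceil> + nat \<lceil>c\<rceil> + 1"
    show "\<exists>M. \<forall>m\<ge>M.
      (\<forall>l\<in>{1..d}.
          (1 - \<epsilon>) * 2 ^ (d - 1) * real m ^ 2 \<le> real (level_edges l (RR m d)) \<and>
          real (level_edges l (RR m d)) \<le> (1 + \<epsilon>) * 2 ^ (d - 1) * real m ^ 2) \<and>
      (1 - \<epsilon>) * real d * 2 ^ (d - 1) * real m ^ 2 \<le> real (card (RR m d)) \<and>
      real (card (RR m d)) \<le> (1 + \<epsilon>) * real d * 2 ^ (d - 1) * real m ^ 2 \<and>
      (\<forall>x y P Q. length x = d \<and> length y = d \<and> x \<noteq> y \<and>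
          P \<subseteq> block m x \<and> Q \<subseteq> block m y \<and>
          real (card P) \<ge> real m powr (2/3) \<and> real (card Q) \<ge> real m powr (2/3) \<longrightarrow>
          real (edges_between (RR m d) P Q)
            \<le> (1 + \<epsilon>) * 2 powr (real (delta x y) - real d) * real (card P) * real (card Q))"
    proof (intro exI[of _ M] allI impI)
      fix m assume mM: "M \<le> m"
      have m1: "1 \<le> m" using mM unfolding M_def by simp
      have "c \<le> real (nat \<lceil>c\<rceil>)" by (rule real_nat_ceiling_ge)
      also have "\<dots> \<le> real m" using mM unfolding M_def of_nat_le_iff by linarith
      finally have mc: "c \<le> real m" .
      have "c^3 \<le> real (nat \<lceil>c^3\<rceil>)" by (rule real_nat_ceiling_ge)
      also have "\<dots> \<le> real m" using mM unfolding M_def of_nat_le_iff by linarith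
      finally have mc3: "c^3 \<le> real m" .
      have e3: "c powr (3::real) = c^3" using c0 powr_realpow[of c 3] by simp
      have "c = c powr ((3::real) * (1/3))" using c0 by simp
      also have "\<dots> = (c powr 3) powr (1/3)" by (rule powr_powr[symmetric])
      also have "\<dots> = (c^3) powr (1/3)" by (simp only: e3)
      also have "(c^3) powr (1/3) \<le> real m powr (1/3)"
        by (rule powr_mono2) (use mc3 c0 in auto)
      finally have mc': "c \<le> real m powr (1/3)" .
      have lev: "\<forall>l\<in>{1..d}.
          (1 - \<epsilon>) * 2 ^ (d - 1) * real m ^ 2 \<le> real (level_edges l (RR m d)) \<and>
          real (level_edges l (RR m d)) \<le> (1 + \<epsilon>) * 2 ^ (d - 1) * real m ^ 2"
        using level_bound[OF _ m1 mc[unfolded c_def] e] by blast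
      have cs: "real (card (RR m d)) = (\<Sum>l\<in>{1..d}. real (level_edges l (RR m d)))"
        unfolding card_RR of_nat_sum by (intro sum.cong refl) (simp add: level_RR)
      have c1: "(1 - \<epsilon>) * real d * 2 ^ (d - 1) * real m ^ 2 \<le> real (card (RR m d))"
      proof -
        have "(\<Sum>l\<in>{1..d}. (1 - \<epsilon>) * 2 ^ (d - 1) * real m ^ 2) \<le> (\<Sum>l\<in>{1..d}. real (level_edges l (RR m d)))"
          using lev by (intro sum_mono) auto
        then show ?thesis unfolding cs by (simp add: algebra_simps)
      qed
      have c2: "real (card (RR m d)) \<le> (1 + \<epsilon>) * real d * 2 ^ (d - 1) * real m ^ 2"
      proof -
        have "(\<Sum>l\<in>{1..d}. real (level_edges l (RR m d))) \<le> (\<Sum>l\<in>{1..d}. (1 + \<epsilon>) * 2 ^ (d - 1) * real m ^ 2)"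
          using lev by (intro sum_mono) auto
        then show ?thesis unfolding cs by (simp add: algebra_simps)
      qed
      have bt: "\<forall>x y P Q. length x = d \<and> length y = d \<and> x \<noteq> y \<and>
          P \<subseteq> block m x \<and> Q \<subseteq> block m y \<and>
          real (card P) \<ge> real m powr (2/3) \<and> real (card Q) \<ge> real m powr (2/3) \<longrightarrow>
          real (edges_between (RR m d) P Q)
            \<le> (1 + \<epsilon>) * 2 powr (real (delta x y) - real d) * real (card P) * real (card Q)"
      proof (intro allI impI)
        fix x y P Q
        assume h: "length x = d \<and> length y = d \<and> x \<noteq> y \<and>
          P \<subseteq> block m x \<and> Q \<subseteq> block m y \<and>
          real (card P) \<ge> real m powr (2/3) \<and> real (card Q) \<ge> real m powr (2/3)"
        show "real (edges_between (RR m d) P Q)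
            \<le> (1 + \<epsilon>) * 2 powr (real (delta x y) - real d) * real (card P) * real (card Q)"
        proof (cases "(x,y) \<in> OP d")
          case True
          then show ?thesis using between_bound[OF True _ _ m1 e mc'[unfolded c_def]] h by blast
        next
          case False
          then have o: "(y,x) \<in> OP d" using OP_flip h by blast
          have "real (edges_between (RR m d) Q P)
            \<le> (1 + \<epsilon>) * 2 powr (real (delta y x) - real d) * real (card Q) * real (card P)"
            using between_bound[OF o _ _ m1 e mc'[unfolded c_def]] h by blast
          then show ?thesis using edges_between_sym[of "RR m d" P Q] delta_sym[of x y] h
            by (simp add: mult.commute mult.left_commute)
        qed
      qed
      show "(\<forall>l\<in>{1..d}.
          (1 - \<epsilon>) * 2 ^ (d - 1) * real m ^ 2 \<le> real (level_edges l (RR m d)) \<and>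
          real (level_edges l (RR m d)) \<le> (1 + \<epsilon>) * 2 ^ (d - 1) * real m ^ 2) \<and>
      (1 - \<epsilon>) * real d * 2 ^ (d - 1) * real m ^ 2 \<le> real (card (RR m d)) \<and>
      real (card (RR m d)) \<le> (1 + \<epsilon>) * real d * 2 ^ (d - 1) * real m ^ 2 \<and>
      (\<forall>x y P Q. length x = d \<and> length y = d \<and> x \<noteq> y \<and>
          P \<subseteq> block m x \<and> Q \<subseteq> block m y \<and>
          real (card P) \<ge> real m powr (2/3) \<and> real (card Q) \<ge> real m powr (2/3) \<longrightarrow>
          real (edges_between (RR m d) P Q)
            \<le> (1 + \<epsilon>) * 2 powr (real (delta x y) - real d) * real (card P) * real (card Q))"
        using lev c1 c2 bt by blast
    qed
  qed
qed

end
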